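(* Let $1\le r\le n$ be integers and suppose there is a prime $p$ with $\frac{n}{r+1}<p\le\frac{n}{r}$ and $r<p$. Then for every $r$-tuple of positive integers $\mathbf{s}=(s_1,\ldots,s_r)$, $H_n(s_1,\ldots,s_r)$ is not an integer.
   Context: $H_n(s_1,\ldots,s_r)=\sum_{1\le k_1<k_2<\cdots<k_r\le n}\frac{1}{k_1^{s_1}\cdots k_r^{s_r}}$. *)

theory Defs
  imports Complex_Main "HOL-Computational_Algebra.Primes"
begin

definition mhs :: "nat \<Rightarrow> nat list \<Rightarrow> real" where
  "mhs n s = (\<Sum>k\<in>{k :: nat list. length k = length s \<and> sorted_wrt (<) k \<and> set k \<subseteq> {1..n}}.
              \<Prod>i<length s. 1 / (real (k ! i) ^ (s ! i)))"

end

theory Submission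
  imports Defs
begin

lemma sorted_unique:
  assumes "sorted_wrt (<) (xs::nat list)" "length xs = r" "set xs \<subseteq> {1..r}"
  shows "xs = [1..<r+1]"
proof -
  have d: "distinct xs" using assms(1) strict_sorted_iff by blast
  have s: "sorted xs" using assms(1) strict_sorted_iff by blast
  have "card (set xs) = r" using d assms(2) distinct_card by blast
  hence "set xs = {1..r}" using assms(3) by (simp add: card_subset_eq)
  hence "set xs = {1..<r+1}" by auto
  hence "sorted_list_of_set (set xs) = [1..<r+1]" by simp
  thus ?thesis using sorted_list_of_set.idem_if_sorted_distinct[OF s d] by simp
qed

lemma nat_bounds:
  fixes n r p :: nat
  assumes "1 \<le> r" "real n / real (r + 1) < real p" "real p \<le> real n / real r"
  shows "n < (r+1)*p" "r*p \<le> n"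
proof -
  have "real n < real p * real (r+1)" using assms(2) by (simp add: field_simps)
  thus "n < (r+1)*p" by (metis mult.commute of_nat_less_iff of_nat_mult)
  have "real p * real r \<le> real n" using assms(1,3) by (simp add: field_simps)
  thus "r*p \<le> n" by (metis mult.commute of_nat_le_iff of_nat_mult)
qed

theorem mainTheorem6:
  fixes n r p :: nat and s :: "nat list"
  assumes "1 \<le> r" and "r \<le> n"
    and "prime p"
    and "real n / real (r + 1) < real p" and "real p \<le> real n / real r"
    and "r < p"
    and "length s = r" and "\<forall>i\<in>set s. 0 < i"
  shows "mhs n s \<notin> \<int>"
proof
  assume Hint: "mhs n s \<in> \<int>"
  have nb1: "n < (r+1)*p" and nb2: "r*p \<le> n" using nat_bounds assms(1,4,5) by auto
  have p1: "p > 1" using assms(3) prime_gt_1_nat by blast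
  define K where "K = {k :: nat list. length k = length s \<and> sorted_wrt (<) k \<and> set k \<subseteq> {1..n}}"
  define Q where "Q = (\<Prod>j\<in>{j\<in>{1..n}. \<not> p dvd j}. j)"
  define S where "S = (\<Sum>i<r. s!i)"
  define D where "D = (p*Q)^S"
  define P where "P = (\<lambda>k::nat list. \<Prod>i<r. (k!i)^(s!i))"
  define main where "main = map (\<lambda>j. j*p) [1..<r+1]"
  have spos: "\<And>i. i < r \<Longrightarrow> s!i > 0" using assms(7,8) nth_mem by blast
  have S1: "S \<ge> 1"
  proof -
    have "s!0 \<le> S" unfolding S_def using assms(1) by (intro member_le_sum) auto
    thus ?thesis using spos[of 0] assms(1) by linarith
  qed
  have ndQ: "\<not> p dvd Q"
  proof
    assume "p dvd Q"
    have fin: "finite {j\<in>{1..n}. \<not> p dvd j}" by simp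
    have "\<exists>j\<in>{j\<in>{1..n}. \<not> p dvd j}. p dvd j"
      using prime_dvd_prod_iff[OF fin assms(3), of "\<lambda>j. j"] \<open>p dvd Q\<close> unfolding Q_def by simp
    then obtain j where "j \<in> {j\<in>{1..n}. \<not> p dvd j}" "p dvd j" by blast
    thus False by auto
  qed
  have Qpos: "Q > 0" unfolding Q_def by (intro prod_pos) auto
  have Kin: "\<And>k i. k \<in> K \<Longrightarrow> i < r \<Longrightarrow> k!i \<in> {1..n}"
  proof -
    fix k i assume k: "k \<in> K" and i: "i < r"
    have "length k = r" "set k \<subseteq> {1..n}" using k assms(7) unfolding K_def by auto
    thus "k!i \<in> {1..n}" using i nth_mem by blast
  qed
  have dvdpQ: "x dvd p*Q" if x: "x \<in> {1..n}" for x
  proof (cases "p dvd x")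
    case False
    hence "x dvd Q" unfolding Q_def using x by (intro dvd_prodI) auto
    thus ?thesis by simp
  next
    case True
    then obtain j where j: "x = p*j" by blast
    have "j \<ge> 1" using x j by (cases j) auto
    have "p*j < p*(r+1)" using x j nb1 by (simp add: mult.commute)
    hence "j \<le> r" by (metis Suc_eq_plus1 less_Suc_eq_le mult_less_cancel1)
    hence "j < p" using assms(6) by linarith
    hence "\<not> p dvd j" using \<open>j \<ge> 1\<close> by (auto dest: dvd_imp_le)
    moreover have "j \<le> n" using \<open>j \<le> r\<close> assms(2) by linarith
    ultimately have "j dvd Q" unfolding Q_def using \<open>j \<ge> 1\<close> by (intro dvd_prodI) auto
    thus ?thesis using j by simp
  qed
  have Dprod: "D = (\<Prod>i<r. (p*Q)^(s!i))" unfolding D_def S_def by (simp add: power_sum)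
  have PdvdD: "P k dvd D" if k: "k \<in> K" for k
    unfolding Dprod P_def
    by (intro prod_dvd_prod dvd_power_same dvdpQ Kin[OF k]) simp
  have Ppos: "P k > 0" if k: "k \<in> K" for k
    unfolding P_def
  proof (intro prod_pos)
    fix i assume "i \<in> {..<r}"
    hence "k!i \<ge> 1" using Kin[OF k, of i] by auto
    thus "0 < k!i^(s!i)" by simp
  qed
  have mainK: "main \<in> K"
  proof -
    have "sorted_wrt (<) main" unfolding main_def sorted_wrt_map
      by (rule sorted_wrt_mono_rel[OF _ sorted_wrt_upt[of 1 "r+1"]]) (use p1 in simp)
    moreover have "set main \<subseteq> {1..n}" unfolding main_def
    proof
      fix x assume "x \<in> set (map (\<lambda>j. j * p) [1..<r + 1])"
      then obtain j where "j \<ge> 1" "j \<le> r" "x = j*p" by auto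
      moreover have "j*p \<le> r*p" using \<open>j \<le> r\<close> by simp
      ultimately have "x \<le> n" "x \<ge> 1" using nb2 p1 by (metis le_trans, simp)
      thus "x \<in> {1..n}" by simp
    qed
    ultimately show ?thesis unfolding K_def main_def using assms(7) by simp
  qed
  have mainnth: "i < r \<Longrightarrow> main!i = (i+1)*p" for i unfolding main_def by (simp del: upt_Suc add: nth_map)
  have other: "\<exists>i<r. \<not> p dvd k!i" if k: "k \<in> K" "k \<noteq> main" for k
  proof (rule ccontr)
    assume "\<not> ?thesis"
    hence all: "\<forall>i<r. p dvd k!i" by blast
    have lk: "length k = r" using k assms(7) unfolding K_def by simp
    have allx: "\<forall>x\<in>set k. p dvd x" using all lk by (metis in_set_conv_nth)
    define m where "m = map (\<lambda>x. x div p) k"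
    have "sorted_wrt (<) k" using k unfolding K_def by simp
    hence "sorted_wrt (<) m" unfolding m_def sorted_wrt_map
    proof (rule sorted_wrt_mono_rel[rotated])
      fix x y assume "x \<in> set k" "y \<in> set k" "x<y"
      then obtain a b where "x = p*a" "y=p*b" using allx by blast
      with \<open>x<y\<close> p1 show "x div p < y div p" by simp
    qed
    moreover have "set m \<subseteq> {1..r}"
    proof
      fix y assume "y \<in> set m"
      then obtain x where x: "x \<in> set k" "y = x div p" unfolding m_def by auto
      then obtain j where j: "x = p*j" using allx by blast
      have xr: "x \<in> {1..n}" using x k unfolding K_def by auto
      have "y = j" using x j p1 by simp
      moreover have "j \<ge> 1" using xr j by (cases j) auto
      moreover have "p*j < p*(r+1)" using xr j nb1 by (simp add: mult.commute)
      hence "j \<le> r" by (metis Suc_eq_plus1 less_Suc_eq_le mult_less_cancel1)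
      ultimately show "y \<in> {1..r}" by simp
    qed
    ultimately have "m = [1..<r+1]" using sorted_unique lk unfolding m_def by simp
    moreover have "map ((\<lambda>j. j*p) \<circ> (\<lambda>x. x div p)) k = k"
      by (rule map_idI) (use allx in auto)
    ultimately have "k = main"
      unfolding main_def m_def by (metis map_map)
    thus False using k by simp
  qed
  have otherdvd: "p * P k dvd D" if k: "k \<in> K" "k \<noteq> main" for k
  proof -
    obtain i0 where i0: "i0 < r" "\<not> p dvd k!i0" using other[OF k] by blast
    have ki0: "k!i0 dvd Q" unfolding Q_def using i0 Kin[OF k(1) i0(1)] by (intro dvd_prodI) auto
    have "p * (k!i0)^(s!i0) dvd (p*Q)^(s!i0)"
    proof -
      obtain t where t: "s!i0 = Suc t" using spos[OF i0(1)] gr0_implies_Suc by blast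
      have "p * (k!i0)^(s!i0) = (p*(k!i0)) * (k!i0)^t" by (simp add: t)
      also have "\<dots> dvd (p*Q) * (p*Q)^t"
        by (intro mult_dvd_mono) (use ki0 in \<open>auto intro: dvd_power_same\<close>)
      finally show ?thesis by (simp add: t)
    qed
    moreover have "(\<Prod>i\<in>{..<r}-{i0}. (k!i)^(s!i)) dvd (\<Prod>i\<in>{..<r}-{i0}. (p*Q)^(s!i))"
      by (intro prod_dvd_prod dvd_power_same dvdpQ Kin[OF k(1)]) simp
    ultimately have "p * (k!i0)^(s!i0) * (\<Prod>i\<in>{..<r}-{i0}. (k!i)^(s!i))
        dvd (p*Q)^(s!i0) * (\<Prod>i\<in>{..<r}-{i0}. (p*Q)^(s!i))" by (rule mult_dvd_mono)
    moreover have "P k = (k!i0)^(s!i0) * (\<Prod>i\<in>{..<r}-{i0}. (k!i)^(s!i))"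
      unfolding P_def using i0 by (simp add: prod.remove)
    moreover have "D = (p*Q)^(s!i0) * (\<Prod>i\<in>{..<r}-{i0}. (p*Q)^(s!i))"
      unfolding Dprod using i0 by (simp add: prod.remove)
    ultimately show ?thesis by (simp add: mult.assoc)
  qed
  have maindvd: "\<not> p dvd (D div P main)"
  proof
    assume "p dvd D div P main"
    define R where "R = (\<Prod>i<r. (i+1)^(s!i))"
    have "P main = (\<Prod>i<r. p^(s!i) * (i+1)^(s!i))" unfolding P_def
    proof (rule prod.cong)
      fix i assume "i \<in> {..<r}"
      hence "main!i = p*(i+1)" using mainnth by (simp add: mult.commute)
      thus "main!i^(s!i) = p^(s!i) * (i+1)^(s!i)" by (simp only: power_mult_distrib)
    qed simp
    also have "\<dots> = (\<Prod>i<r. p^(s!i)) * R" unfolding R_def by (rule prod.distrib)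
    also have "(\<Prod>i<r. p^(s!i)) = p^S" unfolding S_def by (simp add: power_sum)
    finally have Pm: "P main = p^S * R" .
    have "D = p^S * Q^S" unfolding D_def by (simp add: power_mult_distrib)
    obtain c where c: "D = P main * c" using PdvdD[OF mainK] by blast
    have "c = D div P main" using c Ppos[OF mainK] by simp
    hence "p dvd c" using \<open>p dvd D div P main\<close> by simp
    have "p^S * Q^S = p^S * (R * c)" using c Pm \<open>D = p^S * Q^S\<close> by (simp add: mult.assoc)
    hence "Q^S = R*c" using p1 by simp
    hence "p dvd Q^S" using \<open>p dvd c\<close> by simp
    hence "p dvd Q" using prime_dvd_power assms(3) by blast
    thus False using ndQ by simp
  qed
  have finK: "finite K"
  proof -
    have "K \<subseteq> {xs. set xs \<subseteq> {1..n} \<and> length xs = r}" unfolding K_def using assms(7) by auto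
    thus ?thesis using finite_lists_length_eq[of "{1..n}" r] finite_subset by blast
  qed
  define c where "c = (\<lambda>k. D div P k)"
  have termk: "(\<Prod>i<length s. 1 / (real (k ! i) ^ (s ! i))) = real (c k) / real D" if k: "k \<in> K" for k
  proof -
    have "(\<Prod>i<length s. 1 / (real (k ! i) ^ (s ! i))) = 1 / real (P k)"
      unfolding P_def using assms(7) by (simp add: prod_dividef)
    also have "\<dots> = real (c k) / real D"
      unfolding c_def using PdvdD[OF k] Ppos[OF k] Qpos p1
      by (auto simp: real_of_nat_div D_def field_simps)
    finally show ?thesis .
  qed
  have "mhs n s = (\<Sum>k\<in>K. real (c k)) / real D"
    unfolding mhs_def K_def[symmetric] by (simp add: termk sum_divide_distrib)
  hence eq: "real D * mhs n s = real (\<Sum>k\<in>K. c k)" using Qpos p1 unfolding D_def by simp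
  obtain z where z: "mhs n s = of_int z" using Hint Ints_cases by blast
  have "int D * z = int (\<Sum>k\<in>K. c k)" using eq z
    by (metis of_int_eq_iff of_int_mult of_int_of_nat_eq)
  moreover have "int p dvd int D"
  proof -
    have "p dvd p*Q" by simp
    hence "p dvd D" unfolding D_def using S1 using dvd_trans[OF _ dvd_power[of S "p*Q"]] by simp
    thus ?thesis by simp
  qed
  ultimately have "int p dvd int (\<Sum>k\<in>K. c k)" by (metis dvd_mult2)
  hence pdsum: "p dvd (\<Sum>k\<in>K. c k)" by (simp only: int_dvd_int_iff)
  have "p dvd (\<Sum>k\<in>K-{main}. c k)"
  proof (intro dvd_sum)
    fix k assume "k \<in> K - {main}"
    hence k: "k \<in> K" "k \<noteq> main" by auto
    obtain t where "D = p * P k * t" using otherdvd[OF k] by blast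
    hence "c k = p * t" unfolding c_def using Ppos[OF k(1)] by simp
    thus "p dvd c k" by simp
  qed
  moreover have "(\<Sum>k\<in>K. c k) = c main + (\<Sum>k\<in>K-{main}. c k)"
    using finK mainK by (simp add: sum.remove)
  ultimately have "p dvd c main" using pdsum by (simp add: dvd_add_left_iff)
  thus False using maindvd unfolding c_def by simp
qed
end
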